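(* Let $(\mathcal{C},d,\eta)$ be a monoidal anti-involutive category, with $d$ having monoidal structure $\chi_{c_1,c_2}\colon dc_1\otimes dc_2\to d(c_1\otimes c_2)$ and $u\colon1\to d(1)$. Then defining $(c_1,h_1)\otimes(c_2,h_2):=(c_1\otimes c_2,\ \chi_{c_1,c_2}\circ(h_1\otimes h_2))$, with unit $(1,u)$ and with associators and unitors those of $\mathcal{C}$, makes $\mathrm{Herm}\,\mathcal{C}$ into a monoidal dagger category.
   Context: An anti-involutive category $(\mathcal{C},d,\eta)$: functor $d\colon\mathcal{C}\to\mathcal{C}^{\mathrm{op}}$ and natural isomorphism $\eta\colon\mathrm{id}_{\mathcal{C}}\Rightarrow d^2$ with $d(\eta_c)\circ\eta_{dc}=\mathrm{id}_{dc}$. It is monoidal if $\mathcal{C}$ is monoidal, $d$ is a (strong) monoidal functor $\mathcal{C}\to\mathcal{C}^{\mathrm{op}}$ (where $\mathcal{C}^{\mathrm{op}}$ reverses composition but not the tensor product) and $\eta$ is a monoidal natural transformation. A Hermitian pairing on $c$ is an isomorphism $h\colon c\to dc$ with $d(h)\circ\eta_c=h$. $\mathrm{Herm}\,\mathcal{C}$ has objects $(c,h)$, morphisms $(c_1,h_1)\to(c_2,h_2)$ all morphisms $c_1\to c_2$ in $\mathcal{C}$, and dagger $f^\dagger=h_1^{-1}\circ d(f)\circ h_2$. A monoidal dagger category is a dagger category ($\dagger$ identity on objects, $f^{\dagger\dagger}=f$) with a monoidal structure such that $(f\otimes g)^\dagger=f^\dagger\otimes g^\dagger$ and associator and unitors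 are unitary ($u^\dagger=u^{-1}$). *)

theory Defs
  imports Main
begin

text \<open>A category is given by a set of objects, hom-sets, a composition
  (cmp g f = g o f) and identities.  Axioms are required only for objects in Ob.\<close>

record ('o,'m) category =
  Ob  :: "'o set"
  Hom :: "'o \<Rightarrow> 'o \<Rightarrow> 'm set"
  cmp :: "'m \<Rightarrow> 'm \<Rightarrow> 'm"
  idm :: "'o \<Rightarrow> 'm"

record ('o,'m) moncat = "('o,'m) category" +
  tens  :: "'o \<Rightarrow> 'o \<Rightarrow> 'o"
  tensm :: "'m \<Rightarrow> 'm \<Rightarrow> 'm"
  unitO :: "'o"
  assoc :: "'o \<Rightarrow> 'o \<Rightarrow> 'o \<Rightarrow> 'm"   \<comment> \<open>(a x b) x c \<rightarrow> a x (b x c)\<close>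
  lunit :: "'o \<Rightarrow> 'm"                 \<comment> \<open>1 x a \<rightarrow> a\<close>
  runit :: "'o \<Rightarrow> 'm"                 \<comment> \<open>a x 1 \<rightarrow> a\<close>

definition is_category :: "('o,'m,'x) category_scheme \<Rightarrow> bool" where
  "is_category C \<longleftrightarrow>
     (\<forall>a\<in>Ob C. idm C a \<in> Hom C a a) \<and>
     (\<forall>a\<in>Ob C. \<forall>b\<in>Ob C. \<forall>c\<in>Ob C. \<forall>f\<in>Hom C a b. \<forall>g\<in>Hom C b c.
         cmp C g f \<in> Hom C a c) \<and>
     (\<forall>a\<in>Ob C. \<forall>b\<in>Ob C. \<forall>f\<in>Hom C a b.
         cmp C (idm C b) f = f \<and> cmp C f (idm C a) = f) \<and>
     (\<forall>a\<in>Ob C. \<forall>b\<in>Ob C. \<forall>c\<in>Ob C. \<forall>e\<in>Ob C.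
       \<forall>f\<in>Hom C a b. \<forall>g\<in>Hom C b c. \<forall>h\<in>Hom C c e.
         cmp C h (cmp C g f) = cmp C (cmp C h g) f)"

definition is_iso :: "('o,'m,'x) category_scheme \<Rightarrow> 'o \<Rightarrow> 'o \<Rightarrow> 'm \<Rightarrow> bool" where
  "is_iso C a b f \<longleftrightarrow> f \<in> Hom C a b \<and>
     (\<exists>g\<in>Hom C b a. cmp C g f = idm C a \<and> cmp C f g = idm C b)"

definition inv_mor :: "('o,'m,'x) category_scheme \<Rightarrow> 'o \<Rightarrow> 'o \<Rightarrow> 'm \<Rightarrow> 'm" where
  "inv_mor C a b f = (SOME g. g \<in> Hom C b a \<and> cmp C g f = idm C a \<and> cmp C f g = idm C b)"

definition is_monoidal_category :: "('o,'m,'x) moncat_scheme \<Rightarrow> bool" where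
  "is_monoidal_category M \<longleftrightarrow>
     is_category M \<and>
     unitO M \<in> Ob M \<and>
     (\<forall>a\<in>Ob M. \<forall>b\<in>Ob M. tens M a b \<in> Ob M) \<and>
     \<comment> \<open>tensor is a bifunctor\<close>
     (\<forall>a\<in>Ob M. \<forall>b\<in>Ob M. \<forall>a'\<in>Ob M. \<forall>b'\<in>Ob M. \<forall>f\<in>Hom M a b. \<forall>g\<in>Hom M a' b'.
         tensm M f g \<in> Hom M (tens M a a') (tens M b b')) \<and>
     (\<forall>a\<in>Ob M. \<forall>b\<in>Ob M. tensm M (idm M a) (idm M b) = idm M (tens M a b)) \<and>
     (\<forall>a\<in>Ob M. \<forall>b\<in>Ob M. \<forall>c\<in>Ob M. \<forall>a'\<in>Ob M. \<forall>b'\<in>Ob M. \<forall>c'\<in>Ob M.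
       \<forall>f\<in>Hom M a b. \<forall>g\<in>Hom M b c. \<forall>f'\<in>Hom M a' b'. \<forall>g'\<in>Hom M b' c'.
         tensm M (cmp M g f) (cmp M g' f') = cmp M (tensm M g g') (tensm M f f')) \<and>
     \<comment> \<open>associator and unitors: natural isomorphisms\<close>
     (\<forall>a\<in>Ob M. \<forall>b\<in>Ob M. \<forall>c\<in>Ob M.
         is_iso M (tens M (tens M a b) c) (tens M a (tens M b c)) (assoc M a b c)) \<and>
     (\<forall>a\<in>Ob M. \<forall>b\<in>Ob M. \<forall>c\<in>Ob M. \<forall>a'\<in>Ob M. \<forall>b'\<in>Ob M. \<forall>c'\<in>Ob M.
       \<forall>f\<in>Hom M a a'. \<forall>g\<in>Hom M b b'. \<forall>h\<in>Hom M c c'.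
         cmp M (assoc M a' b' c') (tensm M (tensm M f g) h)
           = cmp M (tensm M f (tensm M g h)) (assoc M a b c)) \<and>
     (\<forall>a\<in>Ob M. is_iso M (tens M (unitO M) a) a (lunit M a)) \<and>
     (\<forall>a\<in>Ob M. \<forall>b\<in>Ob M. \<forall>f\<in>Hom M a b.
         cmp M (lunit M b) (tensm M (idm M (unitO M)) f) = cmp M f (lunit M a)) \<and>
     (\<forall>a\<in>Ob M. is_iso M (tens M a (unitO M)) a (runit M a)) \<and>
     (\<forall>a\<in>Ob M. \<forall>b\<in>Ob M. \<forall>f\<in>Hom M a b.
         cmp M (runit M b) (tensm M f (idm M (unitO M))) = cmp M f (runit M a)) \<and>
     \<comment> \<open>pentagon\<close>
     (\<forall>a\<in>Ob M. \<forall>b\<in>Ob M. \<forall>c\<in>Ob M. \<forall>e\<in>Ob M.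
         cmp M (assoc M a b (tens M c e)) (assoc M (tens M a b) c e)
           = cmp M (tensm M (idm M a) (assoc M b c e))
               (cmp M (assoc M a (tens M b c) e) (tensm M (assoc M a b c) (idm M e)))) \<and>
     \<comment> \<open>triangle\<close>
     (\<forall>a\<in>Ob M. \<forall>b\<in>Ob M.
         cmp M (tensm M (idm M a) (lunit M b)) (assoc M a (unitO M) b)
           = tensm M (runit M a) (idm M b))"

text \<open>d is given by dO (objects) and dM (morphisms) as a contravariant functor;
  eta : id => d^2; chi a b : d a x d b -> d (a x b) and u : 1 -> d 1 the strong monoidal
  structure of d : C -> C^op (written as morphisms of C).\<close>

definition monoidal_anti_involutive ::
  "('o,'m,'x) moncat_scheme \<Rightarrow> ('o \<Rightarrow> 'o) \<Rightarrow> ('m \<Rightarrow> 'm) \<Rightarrow> ('o \<Rightarrow> 'm)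
     \<Rightarrow> ('o \<Rightarrow> 'o \<Rightarrow> 'm) \<Rightarrow> 'm \<Rightarrow> bool" where
  "monoidal_anti_involutive M dO dM eta chi u \<longleftrightarrow>
     is_monoidal_category M \<and>
     \<comment> \<open>d : C -> C^op is a functor\<close>
     (\<forall>a\<in>Ob M. dO a \<in> Ob M) \<and>
     (\<forall>a\<in>Ob M. \<forall>b\<in>Ob M. \<forall>f\<in>Hom M a b. dM f \<in> Hom M (dO b) (dO a)) \<and>
     (\<forall>a\<in>Ob M. dM (idm M a) = idm M (dO a)) \<and>
     (\<forall>a\<in>Ob M. \<forall>b\<in>Ob M. \<forall>c\<in>Ob M. \<forall>f\<in>Hom M a b. \<forall>g\<in>Hom M b c.
         dM (cmp M g f) = cmp M (dM f) (dM g)) \<and>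
     \<comment> \<open>eta : id => d^2 natural isomorphism\<close>
     (\<forall>a\<in>Ob M. is_iso M a (dO (dO a)) (eta a)) \<and>
     (\<forall>a\<in>Ob M. \<forall>b\<in>Ob M. \<forall>f\<in>Hom M a b.
         cmp M (dM (dM f)) (eta a) = cmp M (eta b) f) \<and>
     \<comment> \<open>d(eta_c) o eta_(dc) = id_(dc)\<close>
     (\<forall>a\<in>Ob M. cmp M (dM (eta a)) (eta (dO a)) = idm M (dO a)) \<and>
     \<comment> \<open>strong monoidal structure of d\<close>
     (\<forall>a\<in>Ob M. \<forall>b\<in>Ob M.
         is_iso M (tens M (dO a) (dO b)) (dO (tens M a b)) (chi a b)) \<and>
     is_iso M (unitO M) (dO (unitO M)) u \<and>
     (\<forall>a\<in>Ob M. \<forall>b\<in>Ob M. \<forall>a'\<in>Ob M. \<forall>b'\<in>Ob M. \<forall>f\<in>Hom M a a'. \<forall>g\<in>Hom M b b'.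
         cmp M (dM (tensm M f g)) (chi a' b') = cmp M (chi a b) (tensm M (dM f) (dM g))) \<and>
     (\<forall>a\<in>Ob M. \<forall>b\<in>Ob M. \<forall>c\<in>Ob M.
         cmp M (dM (assoc M a b c))
           (cmp M (chi a (tens M b c))
             (cmp M (tensm M (idm M (dO a)) (chi b c)) (assoc M (dO a) (dO b) (dO c))))
         = cmp M (chi (tens M a b) c) (tensm M (chi a b) (idm M (dO c)))) \<and>
     (\<forall>a\<in>Ob M. cmp M (dM (lunit M a)) (lunit M (dO a))
         = cmp M (chi (unitO M) a) (tensm M u (idm M (dO a)))) \<and>
     (\<forall>a\<in>Ob M. cmp M (dM (runit M a)) (runit M (dO a))
         = cmp M (chi a (unitO M)) (tensm M (idm M (dO a)) u)) \<and>
     \<comment> \<open>eta is a monoidal natural transformation id => d^2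
        (the monoidal structure of d^2 being d(chi)^-1 o chi_(d-,d-) and d(u)^-1 o u)\<close>
     (\<forall>a\<in>Ob M. \<forall>b\<in>Ob M.
         cmp M (chi (dO a) (dO b)) (tensm M (eta a) (eta b))
           = cmp M (dM (chi a b)) (eta (tens M a b))) \<and>
     cmp M (dM u) (eta (unitO M)) = u"

definition herm_pairing ::
  "('o,'m,'x) moncat_scheme \<Rightarrow> ('o \<Rightarrow> 'o) \<Rightarrow> ('m \<Rightarrow> 'm) \<Rightarrow> ('o \<Rightarrow> 'm) \<Rightarrow> 'o \<Rightarrow> 'm \<Rightarrow> bool" where
  "herm_pairing M dO dM eta c h \<longleftrightarrow>
     is_iso M c (dO c) h \<and> cmp M (dM h) (eta c) = h"

definition Herm_moncat ::
  "('o,'m,'x) moncat_scheme \<Rightarrow> ('o \<Rightarrow> 'o) \<Rightarrow> ('m \<Rightarrow> 'm) \<Rightarrow> ('o \<Rightarrow> 'm)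
     \<Rightarrow> ('o \<Rightarrow> 'o \<Rightarrow> 'm) \<Rightarrow> 'm \<Rightarrow> ('o \<times> 'm, 'm) moncat" where
  "Herm_moncat M dO dM eta chi u =
    \<lparr> Ob = {(c, h). c \<in> Ob M \<and> herm_pairing M dO dM eta c h},
      Hom = (\<lambda>x y. Hom M (fst x) (fst y)),
      cmp = cmp M,
      idm = (\<lambda>x. idm M (fst x)),
      tens = (\<lambda>x y. (tens M (fst x) (fst y),
                     cmp M (chi (fst x) (fst y)) (tensm M (snd x) (snd y)))),
      tensm = tensm M,
      unitO = (unitO M, u),
      assoc = (\<lambda>x y z. assoc M (fst x) (fst y) (fst z)),
      lunit = (\<lambda>x. lunit M (fst x)),
      runit = (\<lambda>x. runit M (fst x)) \<rparr>"

definition Herm_dag ::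
  "('o,'m,'x) moncat_scheme \<Rightarrow> ('o \<Rightarrow> 'o) \<Rightarrow> ('m \<Rightarrow> 'm)
     \<Rightarrow> 'o \<times> 'm \<Rightarrow> 'o \<times> 'm \<Rightarrow> 'm \<Rightarrow> 'm" where
  "Herm_dag M dO dM x y f =
     cmp M (inv_mor M (fst x) (dO (fst x)) (snd x)) (cmp M (dM f) (snd y))"

definition monoidal_dagger_category ::
  "('o,'m,'x) moncat_scheme \<Rightarrow> ('o \<Rightarrow> 'o \<Rightarrow> 'm \<Rightarrow> 'm) \<Rightarrow> bool" where
  "monoidal_dagger_category M dag \<longleftrightarrow>
     is_monoidal_category M \<and>
     \<comment> \<open>dagger: identity-on-objects contravariant involutive functor\<close>
     (\<forall>a\<in>Ob M. \<forall>b\<in>Ob M. \<forall>f\<in>Hom M a b. dag a b f \<in> Hom M b a) \<and>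
     (\<forall>a\<in>Ob M. dag a a (idm M a) = idm M a) \<and>
     (\<forall>a\<in>Ob M. \<forall>b\<in>Ob M. \<forall>c\<in>Ob M. \<forall>f\<in>Hom M a b. \<forall>g\<in>Hom M b c.
         dag a c (cmp M g f) = cmp M (dag a b f) (dag b c g)) \<and>
     (\<forall>a\<in>Ob M. \<forall>b\<in>Ob M. \<forall>f\<in>Hom M a b. dag b a (dag a b f) = f) \<and>
     \<comment> \<open>compatibility with tensor\<close>
     (\<forall>a\<in>Ob M. \<forall>b\<in>Ob M. \<forall>a'\<in>Ob M. \<forall>b'\<in>Ob M. \<forall>f\<in>Hom M a b. \<forall>g\<in>Hom M a' b'.
         dag (tens M a a') (tens M b b') (tensm M f g) = tensm M (dag a b f) (dag a' b' g)) \<and>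
     \<comment> \<open>associator and unitors are unitary\<close>
     (\<forall>a\<in>Ob M. \<forall>b\<in>Ob M. \<forall>c\<in>Ob M.
         let s = tens M (tens M a b) c; t = tens M a (tens M b c); f = assoc M a b c in
         cmp M (dag s t f) f = idm M s \<and> cmp M f (dag s t f) = idm M t) \<and>
     (\<forall>a\<in>Ob M.
         let s = tens M (unitO M) a; f = lunit M a in
         cmp M (dag s a f) f = idm M s \<and> cmp M f (dag s a f) = idm M a) \<and>
     (\<forall>a\<in>Ob M.
         let s = tens M a (unitO M); f = runit M a in
         cmp M (dag s a f) f = idm M s \<and> cmp M f (dag s a f) = idm M a)"

end

theory Submission imports Defs begin

locale mai =
  fixes M :: "('o,'m) moncat"
    and dO :: "'o \<Rightarrow> 'o" and dM :: "'m \<Rightarrow> 'm" and eta :: "'o \<Rightarrow> 'm"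
    and chi :: "'o \<Rightarrow> 'o \<Rightarrow> 'm" and u :: 'm
  assumes MAI: "monoidal_anti_involutive M dO dM eta chi u"
begin

abbreviation "OB \<equiv> Ob M"
abbreviation "H \<equiv> Hom M"
abbreviation "C \<equiv> cmp M"
abbreviation "I \<equiv> idm M"
abbreviation "T \<equiv> tens M"
abbreviation "TM \<equiv> tensm M"
abbreviation "one \<equiv> unitO M"
abbreviation "iv a b f \<equiv> inv_mor M a b f"

lemma MC: "is_monoidal_category M" using MAI[unfolded monoidal_anti_involutive_def, THEN conjunct1] by blast
lemma CC: "is_category M" using MC[unfolded is_monoidal_category_def, THEN conjunct1] by blast

lemma one_ob[simp,intro!]: "one \<in> OB" using MC[unfolded is_monoidal_category_def, THEN conjunct2, THEN conjunct1] by blast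
lemma tens_ob[simp,intro!]: "a \<in> OB \<Longrightarrow> b \<in> OB \<Longrightarrow> T a b \<in> OB" using MC[unfolded is_monoidal_category_def, THEN conjunct2, THEN conjunct2, THEN conjunct1] by blast
lemma d_ob[simp,intro!]: "a \<in> OB \<Longrightarrow> dO a \<in> OB" using MAI[unfolded monoidal_anti_involutive_def, THEN conjunct2, THEN conjunct1] by blast

lemma id_hom[intro!]: "a \<in> OB \<Longrightarrow> I a \<in> H a a" using CC[unfolded is_category_def, THEN conjunct1] by blast
lemma comp_hom[intro]: "f \<in> H a b \<Longrightarrow> g \<in> H b c \<Longrightarrow> a \<in> OB \<Longrightarrow> b \<in> OB \<Longrightarrow> c \<in> OB \<Longrightarrow> C g f \<in> H a c"
  using CC[unfolded is_category_def, THEN conjunct2, THEN conjunct1] by blast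
lemma cl[simp]: "f \<in> H a b \<Longrightarrow> a \<in> OB \<Longrightarrow> b \<in> OB \<Longrightarrow> C (I b) f = f"
  using CC[unfolded is_category_def, THEN conjunct2, THEN conjunct2, THEN conjunct1] by blast
lemma cr[simp]: "f \<in> H a b \<Longrightarrow> a \<in> OB \<Longrightarrow> b \<in> OB \<Longrightarrow> C f (I a) = f"
  using CC[unfolded is_category_def, THEN conjunct2, THEN conjunct2, THEN conjunct1] by blast
lemma ca: "f \<in> H a b \<Longrightarrow> g \<in> H b c \<Longrightarrow> h \<in> H c e \<Longrightarrow> a \<in> OB \<Longrightarrow> b \<in> OB \<Longrightarrow> c \<in> OB \<Longrightarrow> e \<in> OB \<Longrightarrow>
   C h (C g f) = C (C h g) f"
  using CC[unfolded is_category_def, THEN conjunct2, THEN conjunct2, THEN conjunct2] by blast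

lemma tensm_hom[intro!]: "f \<in> H a b \<Longrightarrow> g \<in> H a' b' \<Longrightarrow> a \<in> OB \<Longrightarrow> b \<in> OB \<Longrightarrow> a' \<in> OB \<Longrightarrow> b' \<in> OB \<Longrightarrow>
   TM f g \<in> H (T a a') (T b b')" using MC[unfolded is_monoidal_category_def, THEN conjunct2, THEN conjunct2, THEN conjunct2, THEN conjunct1] by blast
lemma tens_id[simp]: "a \<in> OB \<Longrightarrow> b \<in> OB \<Longrightarrow> TM (I a) (I b) = I (T a b)"
  using MC[unfolded is_monoidal_category_def, THEN conjunct2, THEN conjunct2, THEN conjunct2, THEN conjunct2, THEN conjunct1] by blast
lemma tens_comp: "f \<in> H a b \<Longrightarrow> g \<in> H b c \<Longrightarrow> f' \<in> H a' b' \<Longrightarrow> g' \<in> H b' c' \<Longrightarrow>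
   a \<in> OB \<Longrightarrow> b \<in> OB \<Longrightarrow> c \<in> OB \<Longrightarrow> a' \<in> OB \<Longrightarrow> b' \<in> OB \<Longrightarrow> c' \<in> OB \<Longrightarrow>
   TM (C g f) (C g' f') = C (TM g g') (TM f f')"
  using MC[unfolded is_monoidal_category_def, THEN conjunct2, THEN conjunct2, THEN conjunct2, THEN conjunct2, THEN conjunct2, THEN conjunct1] by blast
lemma assoc_iso: "a \<in> OB \<Longrightarrow> b \<in> OB \<Longrightarrow> c \<in> OB \<Longrightarrow> is_iso M (T (T a b) c) (T a (T b c)) (assoc M a b c)"
  using MC[unfolded is_monoidal_category_def, THEN conjunct2, THEN conjunct2, THEN conjunct2, THEN conjunct2, THEN conjunct2, THEN conjunct2, THEN conjunct1] by blast
lemma assoc_hom[intro!]: "a \<in> OB \<Longrightarrow> b \<in> OB \<Longrightarrow> c \<in> OB \<Longrightarrow> assoc M a b c \<in> H (T (T a b) c) (T a (T b c))"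
  using assoc_iso unfolding is_iso_def by blast
lemma assoc_nat: "f \<in> H a a' \<Longrightarrow> g \<in> H b b' \<Longrightarrow> h \<in> H c c' \<Longrightarrow>
   a \<in> OB \<Longrightarrow> b \<in> OB \<Longrightarrow> c \<in> OB \<Longrightarrow> a' \<in> OB \<Longrightarrow> b' \<in> OB \<Longrightarrow> c' \<in> OB \<Longrightarrow>
   C (assoc M a' b' c') (TM (TM f g) h) = C (TM f (TM g h)) (assoc M a b c)"
  using MC[unfolded is_monoidal_category_def, THEN conjunct2, THEN conjunct2, THEN conjunct2, THEN conjunct2, THEN conjunct2, THEN conjunct2, THEN conjunct2, THEN conjunct1] by blast
lemma lunit_iso: "a \<in> OB \<Longrightarrow> is_iso M (T one a) a (lunit M a)"
  using MC[unfolded is_monoidal_category_def, THEN conjunct2, THEN conjunct2, THEN conjunct2, THEN conjunct2, THEN conjunct2, THEN conjunct2, THEN conjunct2, THEN conjunct2, THEN conjunct1] by blast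
lemma lunit_hom[intro!]: "a \<in> OB \<Longrightarrow> lunit M a \<in> H (T one a) a"
  using lunit_iso unfolding is_iso_def by blast
lemma lunit_nat: "f \<in> H a b \<Longrightarrow> a \<in> OB \<Longrightarrow> b \<in> OB \<Longrightarrow> C (lunit M b) (TM (I one) f) = C f (lunit M a)"
  using MC[unfolded is_monoidal_category_def, THEN conjunct2, THEN conjunct2, THEN conjunct2, THEN conjunct2, THEN conjunct2, THEN conjunct2, THEN conjunct2, THEN conjunct2, THEN conjunct2, THEN conjunct1] by blast
lemma runit_iso: "a \<in> OB \<Longrightarrow> is_iso M (T a one) a (runit M a)"
  using MC[unfolded is_monoidal_category_def, THEN conjunct2, THEN conjunct2, THEN conjunct2, THEN conjunct2, THEN conjunct2, THEN conjunct2, THEN conjunct2, THEN conjunct2, THEN conjunct2, THEN conjunct2, THEN conjunct1] by blast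
lemma runit_hom[intro!]: "a \<in> OB \<Longrightarrow> runit M a \<in> H (T a one) a"
  using runit_iso unfolding is_iso_def by blast
lemma runit_nat: "f \<in> H a b \<Longrightarrow> a \<in> OB \<Longrightarrow> b \<in> OB \<Longrightarrow> C (runit M b) (TM f (I one)) = C f (runit M a)"
  using MC[unfolded is_monoidal_category_def, THEN conjunct2, THEN conjunct2, THEN conjunct2, THEN conjunct2, THEN conjunct2, THEN conjunct2, THEN conjunct2, THEN conjunct2, THEN conjunct2, THEN conjunct2, THEN conjunct2, THEN conjunct1] by blast

lemma dM_hom[intro!]: "f \<in> H a b \<Longrightarrow> a \<in> OB \<Longrightarrow> b \<in> OB \<Longrightarrow> dM f \<in> H (dO b) (dO a)"
  using MAI[unfolded monoidal_anti_involutive_def, THEN conjunct2, THEN conjunct2, THEN conjunct1] by blast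
lemma d_id[simp]: "a \<in> OB \<Longrightarrow> dM (I a) = I (dO a)"
  using MAI[unfolded monoidal_anti_involutive_def, THEN conjunct2, THEN conjunct2, THEN conjunct2, THEN conjunct1] by blast
lemma d_comp: "f \<in> H a b \<Longrightarrow> g \<in> H b c \<Longrightarrow> a \<in> OB \<Longrightarrow> b \<in> OB \<Longrightarrow> c \<in> OB \<Longrightarrow> dM (C g f) = C (dM f) (dM g)"
  using MAI[unfolded monoidal_anti_involutive_def, THEN conjunct2, THEN conjunct2, THEN conjunct2, THEN conjunct2, THEN conjunct1] by blast
lemma eta_tri: "a \<in> OB \<Longrightarrow> C (dM (eta a)) (eta (dO a)) = I (dO a)"
  using MAI[unfolded monoidal_anti_involutive_def, THEN conjunct2, THEN conjunct2, THEN conjunct2, THEN conjunct2, THEN conjunct2, THEN conjunct2, THEN conjunct2, THEN conjunct1] by blast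
lemma eta_iso: "a \<in> OB \<Longrightarrow> is_iso M a (dO (dO a)) (eta a)"
  using MAI[unfolded monoidal_anti_involutive_def, THEN conjunct2, THEN conjunct2, THEN conjunct2, THEN conjunct2, THEN conjunct2, THEN conjunct1] by blast
lemma eta_hom[intro!]: "a \<in> OB \<Longrightarrow> eta a \<in> H a (dO (dO a))"
  using eta_iso unfolding is_iso_def by blast
lemma eta_nat: "f \<in> H a b \<Longrightarrow> a \<in> OB \<Longrightarrow> b \<in> OB \<Longrightarrow> C (dM (dM f)) (eta a) = C (eta b) f"
  using MAI[unfolded monoidal_anti_involutive_def, THEN conjunct2, THEN conjunct2, THEN conjunct2, THEN conjunct2, THEN conjunct2, THEN conjunct2, THEN conjunct1] by blast
lemma chi_iso: "a \<in> OB \<Longrightarrow> b \<in> OB \<Longrightarrow> is_iso M (T (dO a) (dO b)) (dO (T a b)) (chi a b)"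
  using MAI[unfolded monoidal_anti_involutive_def, THEN conjunct2, THEN conjunct2, THEN conjunct2, THEN conjunct2, THEN conjunct2, THEN conjunct2, THEN conjunct2, THEN conjunct2, THEN conjunct1] by blast
lemma chi_hom[intro!]: "a \<in> OB \<Longrightarrow> b \<in> OB \<Longrightarrow> chi a b \<in> H (T (dO a) (dO b)) (dO (T a b))"
  using chi_iso unfolding is_iso_def by blast
lemma u_iso: "is_iso M one (dO one) u"
  using MAI[unfolded monoidal_anti_involutive_def, THEN conjunct2, THEN conjunct2, THEN conjunct2, THEN conjunct2, THEN conjunct2, THEN conjunct2, THEN conjunct2, THEN conjunct2, THEN conjunct2, THEN conjunct1] by blast
lemma u_hom[intro!]: "u \<in> H one (dO one)"
  using u_iso unfolding is_iso_def by blast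
lemma chi_nat: "f \<in> H a a' \<Longrightarrow> g \<in> H b b' \<Longrightarrow> a \<in> OB \<Longrightarrow> b \<in> OB \<Longrightarrow> a' \<in> OB \<Longrightarrow> b' \<in> OB \<Longrightarrow>
   C (dM (TM f g)) (chi a' b') = C (chi a b) (TM (dM f) (dM g))"
  using MAI[unfolded monoidal_anti_involutive_def, THEN conjunct2, THEN conjunct2, THEN conjunct2, THEN conjunct2, THEN conjunct2, THEN conjunct2, THEN conjunct2, THEN conjunct2, THEN conjunct2, THEN conjunct2, THEN conjunct1] by blast
lemma hexagon: "a \<in> OB \<Longrightarrow> b \<in> OB \<Longrightarrow> c \<in> OB \<Longrightarrow>
         C (dM (assoc M a b c))
           (C (chi a (T b c))
             (C (TM (I (dO a)) (chi b c)) (assoc M (dO a) (dO b) (dO c))))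
         = C (chi (T a b) c) (TM (chi a b) (I (dO c)))"
  using MAI[unfolded monoidal_anti_involutive_def, THEN conjunct2, THEN conjunct2, THEN conjunct2, THEN conjunct2, THEN conjunct2, THEN conjunct2, THEN conjunct2, THEN conjunct2, THEN conjunct2, THEN conjunct2, THEN conjunct2, THEN conjunct1] by blast
lemma d_lunit: "a \<in> OB \<Longrightarrow> C (dM (lunit M a)) (lunit M (dO a)) = C (chi one a) (TM u (I (dO a)))"
  using MAI[unfolded monoidal_anti_involutive_def, THEN conjunct2, THEN conjunct2, THEN conjunct2, THEN conjunct2, THEN conjunct2, THEN conjunct2, THEN conjunct2, THEN conjunct2, THEN conjunct2, THEN conjunct2, THEN conjunct2, THEN conjunct2, THEN conjunct1] by blast
lemma d_runit: "a \<in> OB \<Longrightarrow> C (dM (runit M a)) (runit M (dO a)) = C (chi a one) (TM (I (dO a)) u)"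
  using MAI[unfolded monoidal_anti_involutive_def, THEN conjunct2, THEN conjunct2, THEN conjunct2, THEN conjunct2, THEN conjunct2, THEN conjunct2, THEN conjunct2, THEN conjunct2, THEN conjunct2, THEN conjunct2, THEN conjunct2, THEN conjunct2, THEN conjunct2, THEN conjunct1] by blast
lemma eta_mon: "a \<in> OB \<Longrightarrow> b \<in> OB \<Longrightarrow> C (chi (dO a) (dO b)) (TM (eta a) (eta b)) = C (dM (chi a b)) (eta (T a b))"
  using MAI[unfolded monoidal_anti_involutive_def, THEN conjunct2, THEN conjunct2, THEN conjunct2, THEN conjunct2, THEN conjunct2, THEN conjunct2, THEN conjunct2, THEN conjunct2, THEN conjunct2, THEN conjunct2, THEN conjunct2, THEN conjunct2, THEN conjunct2, THEN conjunct2, THEN conjunct1] by blast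
lemma eta_u: "C (dM u) (eta one) = u"
  using MAI[unfolded monoidal_anti_involutive_def, THEN conjunct2, THEN conjunct2, THEN conjunct2, THEN conjunct2, THEN conjunct2, THEN conjunct2, THEN conjunct2, THEN conjunct2, THEN conjunct2, THEN conjunct2, THEN conjunct2, THEN conjunct2, THEN conjunct2, THEN conjunct2, THEN conjunct2] by blast


lemma iso_hom: "is_iso M a b f \<Longrightarrow> f \<in> H a b" unfolding is_iso_def by blast

lemma inv_props: assumes "is_iso M a b f"
  shows "iv a b f \<in> H b a" "C (iv a b f) f = I a" "C f (iv a b f) = I b"
proof -
  have "\<exists>g. g \<in> H b a \<and> C g f = I a \<and> C f g = I b" using assms unfolding is_iso_def by blast
  from someI_ex[OF this] show "iv a b f \<in> H b a" "C (iv a b f) f = I a" "C f (iv a b f) = I b"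
    unfolding inv_mor_def by blast+
qed

lemma inv_hom[intro!]: "is_iso M a b f \<Longrightarrow> iv a b f \<in> H b a" by (rule inv_props)


lemma iso_comp: assumes f: "is_iso M a b f" and g: "is_iso M b c g" and ob: "a \<in> OB" "b \<in> OB" "c \<in> OB"
  shows "is_iso M a c (C g f)"
proof -
  note fp = inv_props[OF f] and gp = inv_props[OF g]
  have fh: "f \<in> H a b" and gh: "g \<in> H b c" using f g iso_hom by blast+
  let ?k = "C (iv a b f) (iv b c g)"
  have k: "?k \<in> H c a" using fp gp ob by blast
  have "C ?k (C g f) = C (iv a b f) (C (iv b c g) (C g f))" by (rule ca[symmetric], (use fh gh fp gp ob in blast)+)
  also have "C (iv b c g) (C g f) = C (C (iv b c g) g) f" by (rule ca, (use fh gh fp gp ob in blast)+)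
  finally have 1: "C ?k (C g f) = I a" using fh gh fp gp ob by simp
  have "C (C g f) ?k = C g (C f ?k)" by (rule ca[symmetric], (use fh gh fp gp ob in blast)+)
  also have "C f ?k = C (C f (iv a b f)) (iv b c g)" by (rule ca, (use fh gh fp gp ob in blast)+)
  finally have 2: "C (C g f) ?k = I c" using fh gh fp gp ob by simp
  show ?thesis unfolding is_iso_def using 1 2 k fh gh ob by blast
qed

lemma iso_tens: assumes f: "is_iso M a b f" and g: "is_iso M a' b' g" and ob: "a \<in> OB" "b \<in> OB" "a' \<in> OB" "b' \<in> OB"
  shows "is_iso M (T a a') (T b b') (TM f g)"
proof -
  note fp = inv_props[OF f] and gp = inv_props[OF g]
  have fh: "f \<in> H a b" and gh: "g \<in> H a' b'" using f g iso_hom by blast+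
  let ?k = "TM (iv a b f) (iv a' b' g)"
  have k: "?k \<in> H (T b b') (T a a')" using fp gp ob by blast
  have "C ?k (TM f g) = TM (C (iv a b f) f) (C (iv a' b' g) g)" by (rule tens_comp[symmetric], (use fh gh fp gp ob in blast)+)
  then have 1: "C ?k (TM f g) = I (T a a')" using fp gp ob by simp
  have "C (TM f g) ?k = TM (C f (iv a b f)) (C g (iv a' b' g))" by (rule tens_comp[symmetric], (use fh gh fp gp ob in blast)+)
  then have 2: "C (TM f g) ?k = I (T b b')" using fp gp ob by simp
  show ?thesis unfolding is_iso_def using 1 2 k fh gh ob by blast
qed

lemma inv_unique: assumes f: "is_iso M a b f" and g: "g \<in> H b a" "C g f = I a" and ob: "a \<in> OB" "b \<in> OB"
  shows "iv a b f = g"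
proof -
  note fp = inv_props[OF f]
  have fh: "f \<in> H a b" using f iso_hom by blast
  have "g = C (C (iv a b f) f) g" using g ob fp by simp
  also have "\<dots> = C (iv a b f) (C f g)" by (rule ca[symmetric], (use fh g fp ob in blast)+)
  also have "C f g = I b"
  proof -
    have fg: "C f g \<in> H b b" using fh g ob by blast
    have "C f g = C (C f g) (C f (iv a b f))" using fg fp ob by simp
    also have "\<dots> = C (C (C f g) f) (iv a b f)" by (rule ca, (use fh g fp ob in blast)+)
    also have "C (C f g) f = C f (C g f)" by (rule ca[symmetric], (use fh g fp ob in blast)+)
    finally show ?thesis using fh g fp ob by simp
  qed
  finally show ?thesis using fp ob by simp
qed


abbreviation "herm c h \<equiv> herm_pairing M dO dM eta c h"

lemma herm_tens: assumes ob: "a \<in> OB" "b \<in> OB" and ha: "herm a ha" and hb: "herm b hb"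
  shows "herm (T a b) (C (chi a b) (TM ha hb))"
proof -
  have ia: "is_iso M a (dO a) ha" and ea: "C (dM ha) (eta a) = ha" using ha unfolding herm_pairing_def by blast+
  have ib: "is_iso M b (dO b) hb" and eb: "C (dM hb) (eta b) = hb" using hb unfolding herm_pairing_def by blast+
  have a1: "ha \<in> H a (dO a)" and b1: "hb \<in> H b (dO b)" using ia ib iso_hom by blast+
  have iso: "is_iso M (T a b) (dO (T a b)) (C (chi a b) (TM ha hb))"
    by (rule iso_comp[OF iso_tens[OF ia ib] chi_iso]) (use ob in simp_all)
  note F = ob a1 b1
  have "C (dM (C (chi a b) (TM ha hb))) (eta (T a b)) = C (C (dM (TM ha hb)) (dM (chi a b))) (eta (T a b))"
    by (rule arg_cong[where f="\<lambda>x. C x (eta (T a b))"], rule d_comp, (use F in blast)+)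
  also have "\<dots> = C (dM (TM ha hb)) (C (dM (chi a b)) (eta (T a b)))" by (rule ca[symmetric], (use F in blast)+)
  also have "C (dM (chi a b)) (eta (T a b)) = C (chi (dO a) (dO b)) (TM (eta a) (eta b))" using F by (simp add: eta_mon)
  also have "C (dM (TM ha hb)) (C (chi (dO a) (dO b)) (TM (eta a) (eta b))) = C (C (dM (TM ha hb)) (chi (dO a) (dO b))) (TM (eta a) (eta b))"
    by (rule ca, (use F in blast)+)
  also have "C (dM (TM ha hb)) (chi (dO a) (dO b)) = C (chi a b) (TM (dM ha) (dM hb))" by (rule chi_nat, (use F in blast)+)
  also have "C (C (chi a b) (TM (dM ha) (dM hb))) (TM (eta a) (eta b)) = C (chi a b) (C (TM (dM ha) (dM hb)) (TM (eta a) (eta b)))"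
    by (rule ca[symmetric], (use F in blast)+)
  also have "C (TM (dM ha) (dM hb)) (TM (eta a) (eta b)) = TM (C (dM ha) (eta a)) (C (dM hb) (eta b))"
    by (rule tens_comp[symmetric], (use F in blast)+)
  finally show ?thesis unfolding herm_pairing_def using iso ea eb by simp
qed

lemma herm_one: "herm one u"
  unfolding herm_pairing_def using u_iso eta_u by simp


lemma inv_comp: assumes f: "is_iso M a b f" and g: "is_iso M b c g" and ob: "a \<in> OB" "b \<in> OB" "c \<in> OB"
  shows "iv a c (C g f) = C (iv a b f) (iv b c g)"
proof -
  note fp = inv_props[OF f] and gp = inv_props[OF g]
  have fh: "f \<in> H a b" and gh: "g \<in> H b c" using f g iso_hom by blast+
  let ?k = "C (iv a b f) (iv b c g)"
  have k: "?k \<in> H c a" using fp gp ob by blast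
  have "C ?k (C g f) = C (iv a b f) (C (iv b c g) (C g f))" by (rule ca[symmetric], (use fh gh fp gp ob in blast)+)
  also have "C (iv b c g) (C g f) = C (C (iv b c g) g) f" by (rule ca, (use fh gh fp gp ob in blast)+)
  finally have 1: "C ?k (C g f) = I a" using fh gh fp gp ob by simp
  show ?thesis by (rule inv_unique[OF iso_comp[OF f g ob] k 1 ob(1,3)])
qed

lemma inv_tens: assumes f: "is_iso M a b f" and g: "is_iso M a' b' g" and ob: "a \<in> OB" "b \<in> OB" "a' \<in> OB" "b' \<in> OB"
  shows "iv (T a a') (T b b') (TM f g) = TM (iv a b f) (iv a' b' g)"
proof -
  note fp = inv_props[OF f] and gp = inv_props[OF g]
  have fh: "f \<in> H a b" and gh: "g \<in> H a' b'" using f g iso_hom by blast+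
  let ?k = "TM (iv a b f) (iv a' b' g)"
  have k: "?k \<in> H (T b b') (T a a')" using fp gp ob by blast
  have "C ?k (TM f g) = TM (C (iv a b f) f) (C (iv a' b' g) g)" by (rule tens_comp[symmetric], (use fh gh fp gp ob in blast)+)
  then have 1: "C ?k (TM f g) = I (T a a')" using fp gp ob by simp
  show ?thesis by (rule inv_unique[OF iso_tens[OF f g ob] k 1]) (use ob in simp_all)
qed

abbreviation "dg x y f \<equiv> Herm_dag M dO dM x y f"

lemma dg_eq: "dg (a,ha) (b,hb) f = C (iv a (dO a) ha) (C (dM f) hb)"
  unfolding Herm_dag_def by simp

lemma herm_D: assumes "herm a ha" shows "is_iso M a (dO a) ha" "ha \<in> H a (dO a)" "C (dM ha) (eta a) = ha"
  "iv a (dO a) ha \<in> H (dO a) a" "C (iv a (dO a) ha) ha = I a" "C ha (iv a (dO a) ha) = I (dO a)"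
  using assms inv_props[of a "dO a" ha] iso_hom unfolding herm_pairing_def by blast+

lemma dg_hom: assumes ob: "a \<in> OB" "b \<in> OB" and ha: "herm a ha" and hb: "herm b hb" and f: "f \<in> H a b"
  shows "dg (a,ha) (b,hb) f \<in> H b a"
  unfolding dg_eq using herm_D[OF ha] herm_D[OF hb] ob f by blast

lemma dg_id: assumes ob: "a \<in> OB" and ha: "herm a ha"
  shows "dg (a,ha) (a,ha) (I a) = I a"
  unfolding dg_eq using herm_D[OF ha] ob by simp

lemma dg_comp: assumes ob: "a \<in> OB" "b \<in> OB" "c \<in> OB" and ha: "herm a ha" and hb: "herm b hb" and hc: "herm c hc"
  and f: "f \<in> H a b" and g: "g \<in> H b c"
  shows "dg (a,ha) (c,hc) (C g f) = C (dg (a,ha) (b,hb) f) (dg (b,hb) (c,hc) g)"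
proof -
  note F = ob f g herm_D[OF ha] herm_D[OF hb] herm_D[OF hc]
  let ?ia = "iv a (dO a) ha" and ?ib = "iv b (dO b) hb"
  let ?X = "C (dM g) hc"
  have "C (C ?ia (C (dM f) hb)) (C ?ib ?X) = C ?ia (C (C (dM f) hb) (C ?ib ?X))" by (rule ca[symmetric], (use F in blast)+)
  also have "C (C (dM f) hb) (C ?ib ?X) = C (dM f) (C hb (C ?ib ?X))" by (rule ca[symmetric], (use F in blast)+)
  also have "C hb (C ?ib ?X) = C (C hb ?ib) ?X" by (rule ca, (use F in blast)+)
  also have "C (C hb ?ib) ?X = ?X" using F by (subst herm_D(6)[OF hb], subst cl, blast+)
  also have "C (dM f) ?X = C (C (dM f) (dM g)) hc" by (rule ca, (use F in blast)+)
  also have "C (dM f) (dM g) = dM (C g f)" by (rule d_comp[symmetric], (use F in blast)+)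
  finally show ?thesis unfolding dg_eq by simp
qed

lemma dg_inv: assumes ob: "a \<in> OB" "b \<in> OB" and ha: "herm a ha" and hb: "herm b hb" and f: "f \<in> H a b"
  shows "dg (b,hb) (a,ha) (dg (a,ha) (b,hb) f) = f"
proof -
  note F = ob f herm_D[OF ha] herm_D[OF hb]
  let ?ia = "iv a (dO a) ha" and ?ib = "iv b (dO b) hb"
  have "dM (C ?ia (C (dM f) hb)) = C (dM (C (dM f) hb)) (dM ?ia)" by (rule d_comp, (use F in blast)+)
  also have "dM (C (dM f) hb) = C (dM hb) (dM (dM f))" by (rule d_comp, (use F in blast)+)
  finally have 1: "dM (C ?ia (C (dM f) hb)) = C (C (dM hb) (dM (dM f))) (dM ?ia)" .
  have "C (dM ?ia) ha = C (dM ?ia) (C (dM ha) (eta a))" using F by simp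
  also have "\<dots> = C (C (dM ?ia) (dM ha)) (eta a)" by (rule ca, (use F in blast)+)
  also have "C (dM ?ia) (dM ha) = dM (C ha ?ia)" by (rule d_comp[symmetric], (use F in blast)+)
  finally have 2: "C (dM ?ia) ha = eta a" using F eta_hom[of a] by simp
  have "C (C (C (dM hb) (dM (dM f))) (dM ?ia)) ha = C (C (dM hb) (dM (dM f))) (C (dM ?ia) ha)"
    by (rule ca[symmetric], (use F in blast)+)
  also have "\<dots> = C (C (dM hb) (dM (dM f))) (eta a)" using 2 by simp
  also have "\<dots> = C (dM hb) (C (dM (dM f)) (eta a))" by (rule ca[symmetric], (use F in blast)+)
  also have "C (dM (dM f)) (eta a) = C (eta b) f" by (rule eta_nat, (use F in blast)+)
  also have "C (dM hb) (C (eta b) f) = C (C (dM hb) (eta b)) f" by (rule ca, (use F in blast)+)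
  finally have 3: "C (C (C (dM hb) (dM (dM f))) (dM ?ia)) ha = C hb f" using F by simp
  have "C ?ib (C hb f) = C (C ?ib hb) f" by (rule ca, (use F in blast)+)
  then have 4: "C ?ib (C hb f) = f" using F by simp
  show ?thesis unfolding dg_eq 1 3 4 ..
qed


lemma dg_tens: assumes ob: "a \<in> OB" "b \<in> OB" "a' \<in> OB" "b' \<in> OB"
  and ha: "herm a ha" and hb: "herm b hb" and ha': "herm a' ha'" and hb': "herm b' hb'"
  and f: "f \<in> H a b" and g: "g \<in> H a' b'"
  shows "dg (T a a', C (chi a a') (TM ha ha')) (T b b', C (chi b b') (TM hb hb')) (TM f g)
       = TM (dg (a,ha) (b,hb) f) (dg (a',ha') (b',hb') g)"
proof -
  note F = ob f g herm_D[OF ha] herm_D[OF hb] herm_D[OF ha'] herm_D[OF hb'] inv_props[OF chi_iso[of a a']]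
  let ?ia = "iv a (dO a) ha" and ?ia' = "iv a' (dO a') ha'"
  let ?ic = "iv (T (dO a) (dO a')) (dO (T a a')) (chi a a')"
  have "iv (T a a') (dO (T a a')) (C (chi a a') (TM ha ha')) = C (iv (T a a') (T (dO a) (dO a')) (TM ha ha')) ?ic"
    by (rule inv_comp[OF iso_tens chi_iso]) (use F in simp_all)
  also have "iv (T a a') (T (dO a) (dO a')) (TM ha ha') = TM ?ia ?ia'"
    by (rule inv_tens) (use F in simp_all)
  finally have 1: "iv (T a a') (dO (T a a')) (C (chi a a') (TM ha ha')) = C (TM ?ia ?ia') ?ic" .
  have "C (dM (TM f g)) (C (chi b b') (TM hb hb')) = C (C (dM (TM f g)) (chi b b')) (TM hb hb')"
    by (rule ca, (use F in blast)+)
  also have "C (dM (TM f g)) (chi b b') = C (chi a a') (TM (dM f) (dM g))" by (rule chi_nat, (use F in blast)+)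
  finally have 2: "C (dM (TM f g)) (C (chi b b') (TM hb hb')) = C (C (chi a a') (TM (dM f) (dM g))) (TM hb hb')" .
  let ?Z = "TM (dM f) (dM g)" and ?W = "TM hb hb'"
  have e1: "C (C (chi a a') ?Z) ?W = C (chi a a') (C ?Z ?W)" by (rule ca[symmetric], (use F in blast)+)
  have e2: "C ?ic (C (chi a a') (C ?Z ?W)) = C (C ?ic (chi a a')) (C ?Z ?W)" by (rule ca, (use F in blast)+)
  have e3: "C (C ?ic (chi a a')) (C ?Z ?W) = C ?Z ?W"
  proof -
    have "C ?Z ?W \<in> H (T b b') (T (dO a) (dO a'))" using F by blast
    then show ?thesis using F by simp
  qed
  have e4: "C ?Z ?W = TM (C (dM f) hb) (C (dM g) hb')" by (rule tens_comp[symmetric], (use F in blast)+)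
  have e5: "C (TM ?ia ?ia') (TM (C (dM f) hb) (C (dM g) hb')) = TM (C ?ia (C (dM f) hb)) (C ?ia' (C (dM g) hb'))"
    by (rule tens_comp[symmetric], (use F in blast)+)
  have "C (C (TM ?ia ?ia') ?ic) (C (C (chi a a') ?Z) ?W) = C (TM ?ia ?ia') (C ?ic (C (C (chi a a') ?Z) ?W))"
    by (rule ca[symmetric], (use F in blast)+)
  also have "\<dots> = C (TM ?ia ?ia') (C ?ic (C (chi a a') (C ?Z ?W)))" unfolding e1 ..
  also have "\<dots> = C (TM ?ia ?ia') (C (C ?ic (chi a a')) (C ?Z ?W))" unfolding e2 ..
  also have "\<dots> = C (TM ?ia ?ia') (C ?Z ?W)" unfolding e3 ..
  also have "\<dots> = C (TM ?ia ?ia') (TM (C (dM f) hb) (C (dM g) hb'))" unfolding e4 ..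
  also have "\<dots> = TM (C ?ia (C (dM f) hb)) (C ?ia' (C (dM g) hb'))" unfolding e5 ..
  finally have 3: "C (C (TM ?ia ?ia') ?ic) (C (C (chi a a') ?Z) ?W) = TM (C ?ia (C (dM f) hb)) (C ?ia' (C (dM g) hb'))" .
  show ?thesis unfolding Herm_dag_def using 1 2 3 by simp
qed

lemma unitary: assumes ob: "a \<in> OB" "b \<in> OB" and ha: "herm a ha" and hb: "herm b hb"
  and f: "is_iso M a b f" and eq: "C (C (dM f) hb) f = ha"
  shows "C (dg (a,ha) (b,hb) f) f = I a" "C f (dg (a,ha) (b,hb) f) = I b"
proof -
  note F = ob iso_hom[OF f] inv_props[OF f] herm_D[OF ha] herm_D[OF hb]
  let ?ia = "iv a (dO a) ha" and ?g = "iv a b f"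
  have "C (C ?ia (C (dM f) hb)) f = C ?ia (C (C (dM f) hb) f)" by (rule ca[symmetric], (use F in blast)+)
  then show 1: "C (dg (a,ha) (b,hb) f) f = I a" unfolding dg_eq using eq F by simp
  have dh: "dg (a,ha) (b,hb) f \<in> H b a" using dg_hom[OF ob ha hb iso_hom[OF f]] .
  have "C (dg (a,ha) (b,hb) f) (C f ?g) = C (C (dg (a,ha) (b,hb) f) f) ?g" by (rule ca, (use F dh in blast)+)
  then have "dg (a,ha) (b,hb) f = ?g" using 1 F dh by simp
  then show "C f (dg (a,ha) (b,hb) f) = I b" using F by simp
qed

lemma assoc_eq: assumes ob: "a \<in> OB" "b \<in> OB" "c \<in> OB" and ha: "herm a ha" and hb: "herm b hb" and hc: "herm c hc"
  shows "C (C (dM (assoc M a b c)) (C (chi a (T b c)) (TM ha (C (chi b c) (TM hb hc))))) (assoc M a b c)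
     = C (chi (T a b) c) (TM (C (chi a b) (TM ha hb)) hc)"
proof -
  note F = ob herm_D[OF ha] herm_D[OF hb] herm_D[OF hc]
  let ?al = "assoc M a b c" and ?Ad = "assoc M (dO a) (dO b) (dO c)"
  let ?P = "TM (I (dO a)) (chi b c)" and ?Q = "TM ha (TM hb hc)" and ?R = "TM (TM ha hb) hc"
  let ?c1 = "chi a (T b c)"
  have s1: "TM ha (C (chi b c) (TM hb hc)) = C ?P ?Q"
  proof -
    have "C ?P ?Q = TM (C (I (dO a)) ha) (C (chi b c) (TM hb hc))" by (rule tens_comp[symmetric], (use F in blast)+)
    then show ?thesis using F by simp
  qed
  have "C (C (dM ?al) (C ?c1 (C ?P ?Q))) ?al = C (dM ?al) (C (C ?c1 (C ?P ?Q)) ?al)" by (rule ca[symmetric], (use F in blast)+)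
  also have "C (C ?c1 (C ?P ?Q)) ?al = C ?c1 (C (C ?P ?Q) ?al)" by (rule ca[symmetric], (use F in blast)+)
  also have "C (C ?P ?Q) ?al = C ?P (C ?Q ?al)" by (rule ca[symmetric], (use F in blast)+)
  also have "C ?Q ?al = C ?Ad ?R" by (rule assoc_nat[symmetric], (use F in blast)+)
  also have "C ?P (C ?Ad ?R) = C (C ?P ?Ad) ?R" by (rule ca, (use F in blast)+)
  also have "C ?c1 (C (C ?P ?Ad) ?R) = C (C ?c1 (C ?P ?Ad)) ?R" by (rule ca, (use F in blast)+)
  also have "C (dM ?al) (C (C ?c1 (C ?P ?Ad)) ?R) = C (C (dM ?al) (C ?c1 (C ?P ?Ad))) ?R" by (rule ca, (use F in blast)+)
  also have "C (dM ?al) (C ?c1 (C ?P ?Ad)) = C (chi (T a b) c) (TM (chi a b) (I (dO c)))" using F by (simp add: hexagon)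
  also have "C (C (chi (T a b) c) (TM (chi a b) (I (dO c)))) ?R = C (chi (T a b) c) (C (TM (chi a b) (I (dO c))) ?R)"
    by (rule ca[symmetric], (use F in blast)+)
  also have "C (TM (chi a b) (I (dO c))) ?R = TM (C (chi a b) (TM ha hb)) (C (I (dO c)) hc)"
    by (rule tens_comp[symmetric], (use F in blast)+)
  finally show ?thesis using s1 F by simp
qed

lemma lunit_eq: assumes ob: "a \<in> OB" and ha: "herm a ha"
  shows "C (C (dM (lunit M a)) ha) (lunit M a) = C (chi one a) (TM u ha)"
proof -
  note F = ob herm_D[OF ha]
  let ?l = "lunit M a" and ?ld = "lunit M (dO a)"
  have "C (C (dM ?l) ha) ?l = C (dM ?l) (C ha ?l)" by (rule ca[symmetric], (use F in blast)+)
  also have "C ha ?l = C ?ld (TM (I one) ha)" by (rule lunit_nat[symmetric], (use F in blast)+)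
  also have "C (dM ?l) (C ?ld (TM (I one) ha)) = C (C (dM ?l) ?ld) (TM (I one) ha)" by (rule ca, (use F in blast)+)
  also have "C (dM ?l) ?ld = C (chi one a) (TM u (I (dO a)))" using F by (simp add: d_lunit)
  also have "C (C (chi one a) (TM u (I (dO a)))) (TM (I one) ha) = C (chi one a) (C (TM u (I (dO a))) (TM (I one) ha))"
    by (rule ca[symmetric], (use F in blast)+)
  also have "C (TM u (I (dO a))) (TM (I one) ha) = TM (C u (I one)) (C (I (dO a)) ha)"
    by (rule tens_comp[symmetric], (use F in blast)+)
  finally show ?thesis using F u_hom by simp
qed

lemma runit_eq: assumes ob: "a \<in> OB" and ha: "herm a ha"
  shows "C (C (dM (runit M a)) ha) (runit M a) = C (chi a one) (TM ha u)"
proof -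
  note F = ob herm_D[OF ha]
  let ?l = "runit M a" and ?ld = "runit M (dO a)"
  have "C (C (dM ?l) ha) ?l = C (dM ?l) (C ha ?l)" by (rule ca[symmetric], (use F in blast)+)
  also have "C ha ?l = C ?ld (TM ha (I one))" by (rule runit_nat[symmetric], (use F in blast)+)
  also have "C (dM ?l) (C ?ld (TM ha (I one))) = C (C (dM ?l) ?ld) (TM ha (I one))" by (rule ca, (use F in blast)+)
  also have "C (dM ?l) ?ld = C (chi a one) (TM (I (dO a)) u)" using F by (simp add: d_runit)
  also have "C (C (chi a one) (TM (I (dO a)) u)) (TM ha (I one)) = C (chi a one) (C (TM (I (dO a)) u) (TM ha (I one)))"
    by (rule ca[symmetric], (use F in blast)+)
  also have "C (TM (I (dO a)) u) (TM ha (I one)) = TM (C (I (dO a)) ha) (C u (I one))"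
    by (rule tens_comp[symmetric], (use F in blast)+)
  finally show ?thesis using F u_hom by simp
qed


abbreviation "Hm \<equiv> Herm_moncat M dO dM eta chi u"

lemma Hm_simps: "Hom Hm = (\<lambda>x y. H (fst x) (fst y))" "cmp Hm = C" "idm Hm = (\<lambda>x. I (fst x))"
  "tens Hm = (\<lambda>x y. (T (fst x) (fst y), C (chi (fst x) (fst y)) (TM (snd x) (snd y))))"
  "tensm Hm = TM" "unitO Hm = (one, u)" "assoc Hm = (\<lambda>x y z. assoc M (fst x) (fst y) (fst z))"
  "lunit Hm = (\<lambda>x. lunit M (fst x))" "runit Hm = (\<lambda>x. runit M (fst x))"
  by (simp_all add: Herm_moncat_def)

lemma Hm_ob: "x \<in> Ob Hm \<longleftrightarrow> fst x \<in> OB \<and> herm (fst x) (snd x)"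
  by (cases x) (simp add: Herm_moncat_def)

lemma iso_Hm: "is_iso Hm x y f \<longleftrightarrow> is_iso M (fst x) (fst y) f"
  unfolding is_iso_def Hm_simps by simp

lemma Hm_cat: "is_category Hm"
  unfolding is_category_def Hm_simps Hm_ob Ball_def
  apply (intro conjI allI impI)
  apply blast
  apply blast
  apply simp
  apply simp
  apply (rule ca, blast+)
  done

lemma Hm_mon: "is_monoidal_category Hm"
  unfolding is_monoidal_category_def
  apply (intro conjI)
  apply (rule Hm_cat)
  unfolding Hm_simps Hm_ob Ball_def iso_Hm
  apply (simp add: herm_one)
  apply (simp add: herm_tens)
  apply (simp, blast)
  apply simp
  apply (simp, intro allI impI, rule tens_comp, blast+)
  apply (simp add: assoc_iso)
  apply (simp, intro allI impI, rule assoc_nat, blast+)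
  apply (simp add: lunit_iso)
  apply (simp, intro allI impI, rule lunit_nat, blast+)
  apply (simp add: runit_iso)
  apply (simp, intro allI impI, rule runit_nat, blast+)
  subgoal using MC unfolding is_monoidal_category_def by (simp add: Ball_def)
  subgoal using MC unfolding is_monoidal_category_def by (simp add: Ball_def)
  done


lemma Hm_dag: "monoidal_dagger_category Hm (Herm_dag M dO dM)"
  unfolding monoidal_dagger_category_def
proof (intro conjI)
  show "is_monoidal_category Hm" by (rule Hm_mon)
  show "\<forall>a\<in>Ob Hm. \<forall>b\<in>Ob Hm. \<forall>f\<in>Hom Hm a b. dg a b f \<in> Hom Hm b a"
    unfolding Hm_simps Hm_ob Ball_def
  proof (intro allI impI)
    fix x y f assume "fst x \<in> OB \<and> herm (fst x) (snd x)" "fst y \<in> OB \<and> herm (fst y) (snd y)" "f \<in> H (fst x) (fst y)"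
    then show "dg x y f \<in> H (fst y) (fst x)" using dg_hom[of "fst x" "fst y" "snd x" "snd y" f] by simp
  qed
  show "\<forall>a\<in>Ob Hm. dg a a (idm Hm a) = idm Hm a"
    unfolding Hm_simps Hm_ob Ball_def
  proof (intro allI impI)
    fix x assume "fst x \<in> OB \<and> herm (fst x) (snd x)"
    then show "dg x x (I (fst x)) = I (fst x)" using dg_id[of "fst x" "snd x"] by simp
  qed
  show "\<forall>a\<in>Ob Hm. \<forall>b\<in>Ob Hm. \<forall>c\<in>Ob Hm. \<forall>f\<in>Hom Hm a b. \<forall>g\<in>Hom Hm b c.
         dg a c (cmp Hm g f) = cmp Hm (dg a b f) (dg b c g)"
    unfolding Hm_simps Hm_ob Ball_def
  proof (intro allI impI)
    fix x y z f g assume "fst x \<in> OB \<and> herm (fst x) (snd x)" "fst y \<in> OB \<and> herm (fst y) (snd y)"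
      "fst z \<in> OB \<and> herm (fst z) (snd z)" "f \<in> H (fst x) (fst y)" "g \<in> H (fst y) (fst z)"
    then show "dg x z (C g f) = C (dg x y f) (dg y z g)"
      using dg_comp[of "fst x" "fst y" "fst z" "snd x" "snd y" "snd z" f g] by simp
  qed
  show "\<forall>a\<in>Ob Hm. \<forall>b\<in>Ob Hm. \<forall>f\<in>Hom Hm a b. dg b a (dg a b f) = f"
    unfolding Hm_simps Hm_ob Ball_def
  proof (intro allI impI)
    fix x y f assume "fst x \<in> OB \<and> herm (fst x) (snd x)" "fst y \<in> OB \<and> herm (fst y) (snd y)" "f \<in> H (fst x) (fst y)"
    then show "dg y x (dg x y f) = f" using dg_inv[of "fst x" "fst y" "snd x" "snd y" f] by simp
  qed
  show "\<forall>a\<in>Ob Hm. \<forall>b\<in>Ob Hm. \<forall>a'\<in>Ob Hm. \<forall>b'\<in>Ob Hm. \<forall>f\<in>Hom Hm a b. \<forall>g\<in>Hom Hm a' b'.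
         dg (tens Hm a a') (tens Hm b b') (tensm Hm f g) = tensm Hm (dg a b f) (dg a' b' g)"
    unfolding Hm_simps Hm_ob Ball_def
  proof (intro allI impI)
    fix x y x' y' f g assume "fst x \<in> OB \<and> herm (fst x) (snd x)" "fst y \<in> OB \<and> herm (fst y) (snd y)"
      "fst x' \<in> OB \<and> herm (fst x') (snd x')" "fst y' \<in> OB \<and> herm (fst y') (snd y')"
      "f \<in> H (fst x) (fst y)" "g \<in> H (fst x') (fst y')"
    then show "dg (T (fst x) (fst x'), C (chi (fst x) (fst x')) (TM (snd x) (snd x')))
                  (T (fst y) (fst y'), C (chi (fst y) (fst y')) (TM (snd y) (snd y'))) (TM f g)
             = TM (dg x y f) (dg x' y' g)"
      using dg_tens[of "fst x" "fst y" "fst x'" "fst y'" "snd x" "snd y" "snd x'" "snd y'" f g] by simp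
  qed
  show "\<forall>a\<in>Ob Hm. \<forall>b\<in>Ob Hm. \<forall>c\<in>Ob Hm.
         let s = tens Hm (tens Hm a b) c; t = tens Hm a (tens Hm b c); f = assoc Hm a b c in
         cmp Hm (dg s t f) f = idm Hm s \<and> cmp Hm f (dg s t f) = idm Hm t"
    unfolding Hm_simps Hm_ob Ball_def Let_def
    apply (intro allI impI)
    subgoal for x y z
    proof -
    assume A: "fst x \<in> OB \<and> herm (fst x) (snd x)" "fst y \<in> OB \<and> herm (fst y) (snd y)"
      "fst z \<in> OB \<and> herm (fst z) (snd z)"
    let ?a = "fst x" and ?b = "fst y" and ?c = "fst z"
    have h1: "herm (T (T ?a ?b) ?c) (C (chi (T ?a ?b) ?c) (TM (C (chi ?a ?b) (TM (snd x) (snd y))) (snd z)))"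
      using A by (simp add: herm_tens)
    have h2: "herm (T ?a (T ?b ?c)) (C (chi ?a (T ?b ?c)) (TM (snd x) (C (chi ?b ?c) (TM (snd y) (snd z)))))"
      using A by (simp add: herm_tens)
    note U = unitary[OF _ _ h1 h2 assoc_iso assoc_eq]
    show ?thesis
      using U A by simp
  qed
  done
  show "\<forall>a\<in>Ob Hm.
         let s = tens Hm (unitO Hm) a; f = lunit Hm a in
         cmp Hm (dg s a f) f = idm Hm s \<and> cmp Hm f (dg s a f) = idm Hm a"
    unfolding Hm_simps Hm_ob Ball_def Let_def
  proof (intro allI impI)
    fix x assume A: "fst x \<in> OB \<and> herm (fst x) (snd x)"
    have h1: "herm (T one (fst x)) (C (chi one (fst x)) (TM u (snd x)))"
      using A herm_one by (simp add: herm_tens)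
    have e: "x = (fst x, snd x)" by simp
    note U = unitary[OF _ _ h1 A[THEN conjunct2] lunit_iso lunit_eq]
    show "C (dg (T (fst (one, u)) (fst x), C (chi (fst (one, u)) (fst x)) (TM (snd (one, u)) (snd x))) x (lunit M (fst x))) (lunit M (fst x)) =
          I (fst (T (fst (one, u)) (fst x), C (chi (fst (one, u)) (fst x)) (TM (snd (one, u)) (snd x)))) \<and>
          C (lunit M (fst x)) (dg (T (fst (one, u)) (fst x), C (chi (fst (one, u)) (fst x)) (TM (snd (one, u)) (snd x))) x (lunit M (fst x))) =
          I (fst x)"
      using U A by (subst (1 2) e, simp)
  qed
  show "\<forall>a\<in>Ob Hm.
         let s = tens Hm a (unitO Hm); f = runit Hm a in
         cmp Hm (dg s a f) f = idm Hm s \<and> cmp Hm f (dg s a f) = idm Hm a"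
    unfolding Hm_simps Hm_ob Ball_def Let_def
  proof (intro allI impI)
    fix x assume A: "fst x \<in> OB \<and> herm (fst x) (snd x)"
    have h1: "herm (T (fst x) one) (C (chi (fst x) one) (TM (snd x) u))"
      using A herm_one by (simp add: herm_tens)
    have e: "x = (fst x, snd x)" by simp
    note U = unitary[OF _ _ h1 A[THEN conjunct2] runit_iso runit_eq]
    show "C (dg (T (fst x) (fst (one, u)), C (chi (fst x) (fst (one, u))) (TM (snd x) (snd (one, u)))) x (runit M (fst x))) (runit M (fst x)) =
          I (fst (T (fst x) (fst (one, u)), C (chi (fst x) (fst (one, u))) (TM (snd x) (snd (one, u))))) \<and>
          C (runit M (fst x)) (dg (T (fst x) (fst (one, u)), C (chi (fst x) (fst (one, u))) (TM (snd x) (snd (one, u)))) x (runit M (fst x))) =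
          I (fst x)"
      using U A by (subst (1 2) e, simp)
  qed
qed

end

theorem mainTheorem6:
  fixes M :: "('o,'m) moncat"
    and dO :: "'o \<Rightarrow> 'o" and dM :: "'m \<Rightarrow> 'm" and eta :: "'o \<Rightarrow> 'm"
    and chi :: "'o \<Rightarrow> 'o \<Rightarrow> 'm" and u :: 'm
  assumes "monoidal_anti_involutive M dO dM eta chi u"
  shows "monoidal_dagger_category (Herm_moncat M dO dM eta chi u) (Herm_dag M dO dM)"
  by (rule mai.Hm_dag, rule mai.intro, rule assms)

end
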